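(* Let $(\mathfrak g,r)$ be a triangular Lie bialgebra with $r:\mathfrak g^*\to\mathfrak g$ invertible. For $\mu\in\mathbb R$ and $\kappa_1,\kappa_2\in\mathbb R$ with $\kappa_1\neq0$, $\kappa_2^2\neq1$, define linear maps on $\mathcal D(\mathfrak g)$ by $N_\mu(x,a^* )=(x,\mu r^{-1}(x)-a^* )$ and $N_{\kappa_1,\kappa_2}(x,a^* )=(\kappa_1r(a^* )+\kappa_2x,\ \frac{1-\kappa_2^2}{\kappa_1}r^{-1}(x)-\kappa_2a^* )$. Let $\tilde N_{\pm,\mu}=N_\mu\varphi^{-1}\pm\varphi^{-1}$ and $\tilde N_{\pm,\kappa_1,\kappa_2}=N_{\kappa_1,\kappa_2}\varphi^{-1}\pm\varphi^{-1}$, regarded as elements of $\mathcal D(\mathfrak g)\otimes\mathcal D(\mathfrak g)$. Then each of them is a solution of the CYBE in $\mathcal D(\mathfrak g)$ whose symmetric part is invariant and invertible; i.e. $(\mathcal D(\mathfrak g),\tilde N_{\pm,\mu})$ and $(\mathcal D(\mathfrak g),\tilde N_{\pm,\kappa_1,\kappa_2})$ are factorizable quasitriangular Lie bialgebras.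
   Context: $\mathfrak g$ a finite-dimensional real Lie algebra; $t\in V\otimes V$ is identified with $t:V^*\to V$ via $\langle t(a),b\rangle=\langle a\otimes b,t\rangle$. $(\mathfrak g,r)$ triangular: $r$ skew-symmetric solution of the CYBE $[r_{12},r_{13}]+[r_{12},r_{23}]+[r_{13},r_{23}]=0$ (for $r=\sum a_i\otimes b_i$: $[r_{12},r_{13}]=\sum[a_i,a_j]\otimes b_i\otimes b_j$, $[r_{12},r_{23}]=\sum a_i\otimes[b_i,a_j]\otimes b_j$, $[r_{13},r_{23}]=\sum a_i\otimes a_j\otimes[b_i,b_j]$). $\langle\mathrm{ad}^*(x)a^*,y\rangle=-\langle a^*,[x,y]\rangle$; $[a^*,b^*]_\delta=\mathrm{ad}^*(r(a^* ))b^*-\mathrm{ad}^*(r(b^* ))a^*$; $\langle\mathrm{ad}^*(a^* )x,b^*\rangle=-\langle x,[a^*,b^*]_\delta\rangle$. $\mathcal D(\mathfrak g)=\mathfrak g\oplus\mathfrak g^*$ with bracket $[(x,a^* ),(y,b^* )]=([x,y]+\mathrm{ad}^*(a^* )y-\mathrm{ad}^*(b^* )x,[a^*,b^*]_\delta+\mathrm{ad}^*(x)b^*-\mathrm{ad}^*(y)a^* )$ and form $\mathfrak B_p((x,a^* ),(y,b^* ))=\langle a^*,y\rangle+\langle x,b^*\rangle$; $\varphi$ defined by $\mathfrak B_p(X,Y)=\langle\varphi(X),Y\rangle$. A quasitriangular Lie bialgebra is factorizable if the symmetric part of its $r$-matrix is invertible as a map from the dual to the algebra. *)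

theory Defs
  imports "HOL-Analysis.Analysis"
begin

text \<open>A finite-dimensional real Lie algebra g is modelled on real^'n with a
bracket br. Its dual g* is modelled on the same type, with pairing <a,x> = a \<bullet> x.
Tensors in V (x) V are finite sums of pure tensors, given as lists of pairs (a_i,b_i)
meaning sum a_i (x) b_i; the dual of V is identified with V via the inner product.
For the double D(g) = g (+) g* (type (real^'n) x (real^'n)), its dual D* = g* (+) g is
modelled on the same product type, the pairing <(alpha,xi),(y,b)> = alpha.y + xi.b being
exactly the inner product of the product type.\<close>

definition lie_algebra :: "('v::real_vector \<Rightarrow> 'v \<Rightarrow> 'v) \<Rightarrow> bool" where
  "lie_algebra br \<longleftrightarrow> (\<forall>x. linear (br x)) \<and> (\<forall>y. linear (\<lambda>x. br x y))
     \<and> (\<forall>x y. br x y = - br y x)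
     \<and> (\<forall>x y z. br x (br y z) + br y (br z x) + br z (br x y) = 0)"

definition ev2 :: "('v::real_inner \<times> 'v) list \<Rightarrow> 'v \<Rightarrow> 'v \<Rightarrow> real" where
  "ev2 ts a b = (\<Sum>(x,y)\<leftarrow>ts. inner a x * inner b y)"

text \<open>The map t : V* \<rightarrow> V with <t(a),b> = <a (x) b, t>.\<close>
definition tmap :: "('v::real_inner \<times> 'v) list \<Rightarrow> 'v \<Rightarrow> 'v" where
  "tmap ts a = (\<Sum>(x,y)\<leftarrow>ts. inner a x *\<^sub>R y)"

definition skew_tensor :: "('v::real_inner \<times> 'v) list \<Rightarrow> bool" where
  "skew_tensor ts \<longleftrightarrow> (\<forall>a b. ev2 ts a b = - ev2 ts b a)"

text \<open>CYBE: [r12,r13]+[r12,r23]+[r13,r23] = 0, the 3-tensor being evaluated on all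
 xi (x) eta (x) zeta with xi, eta, zeta dual vectors.\<close>
definition cybe :: "('v::real_inner \<Rightarrow> 'v \<Rightarrow> 'v) \<Rightarrow> ('v \<times> 'v) list \<Rightarrow> bool" where
  "cybe br ts \<longleftrightarrow> (\<forall>\<xi> \<eta> \<zeta>.
      (\<Sum>(ai,bi)\<leftarrow>ts. \<Sum>(aj,bj)\<leftarrow>ts. inner \<xi> (br ai aj) * inner \<eta> bi * inner \<zeta> bj)
    + (\<Sum>(ai,bi)\<leftarrow>ts. \<Sum>(aj,bj)\<leftarrow>ts. inner \<xi> ai * inner \<eta> (br bi aj) * inner \<zeta> bj)
    + (\<Sum>(ai,bi)\<leftarrow>ts. \<Sum>(aj,bj)\<leftarrow>ts. inner \<xi> ai * inner \<eta> aj * inner \<zeta> (br bi bj)) = 0)"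

definition sym_part :: "('v::real_inner \<times> 'v) list \<Rightarrow> ('v \<times> 'v) list" where
  "sym_part ts = map (\<lambda>(x,y). ((1/2) *\<^sub>R x, y)) ts @ map (\<lambda>(x,y). ((1/2) *\<^sub>R y, x)) ts"

text \<open>ad-invariance of a 2-tensor: [x (x) 1 + 1 (x) x, s] = 0 for all x.\<close>
definition invariant_tensor :: "('v::real_inner \<Rightarrow> 'v \<Rightarrow> 'v) \<Rightarrow> ('v \<times> 'v) list \<Rightarrow> bool" where
  "invariant_tensor br ts \<longleftrightarrow> (\<forall>z a b.
      (\<Sum>(x,y)\<leftarrow>ts. inner a (br z x) * inner b y + inner a x * inner b (br z y)) = 0)"

definition factorizable :: "('v::real_inner \<Rightarrow> 'v \<Rightarrow> 'v) \<Rightarrow> ('v \<Rightarrow> 'v) \<Rightarrow> bool" where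
  "factorizable br t \<longleftrightarrow> (\<exists>ts. tmap ts = t \<and> cybe br ts \<and> invariant_tensor br (sym_part ts)
      \<and> bij (tmap (sym_part ts)))"

definition triangular :: "('v::real_inner \<Rightarrow> 'v \<Rightarrow> 'v) \<Rightarrow> ('v \<times> 'v) list \<Rightarrow> bool" where
  "triangular br rs \<longleftrightarrow> skew_tensor rs \<and> cybe br rs"

definition coad :: "('v::real_inner \<Rightarrow> 'v \<Rightarrow> 'v) \<Rightarrow> 'v \<Rightarrow> 'v \<Rightarrow> 'v" where
  "coad br x a = - adjoint (br x) a"

definition brd :: "('v::real_inner \<Rightarrow> 'v \<Rightarrow> 'v) \<Rightarrow> ('v \<Rightarrow> 'v) \<Rightarrow> 'v \<Rightarrow> 'v \<Rightarrow> 'v" where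
  "brd br r a b = coad br (r a) b - coad br (r b) a"

definition coadd :: "('v::real_inner \<Rightarrow> 'v \<Rightarrow> 'v) \<Rightarrow> ('v \<Rightarrow> 'v) \<Rightarrow> 'v \<Rightarrow> 'v \<Rightarrow> 'v" where
  "coadd br r a x = - adjoint (brd br r a) x"

definition brD :: "('v::real_inner \<Rightarrow> 'v \<Rightarrow> 'v) \<Rightarrow> ('v \<Rightarrow> 'v) \<Rightarrow> 'v \<times> 'v \<Rightarrow> 'v \<times> 'v \<Rightarrow> 'v \<times> 'v" where
  "brD br r X Y = (case X of (x,a) \<Rightarrow> case Y of (y,b) \<Rightarrow>
     (br x y + coadd br r a y - coadd br r b x, brd br r a b + coad br x b - coad br y a))"

definition Bp :: "'v::real_inner \<times> 'v \<Rightarrow> 'v \<times> 'v \<Rightarrow> real" where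
  "Bp X Y = (case X of (x,a) \<Rightarrow> case Y of (y,b) \<Rightarrow> inner a y + inner x b)"

definition phi :: "'v::real_inner \<times> 'v \<Rightarrow> 'v \<times> 'v" where
  "phi X = (THE Z. \<forall>Y. inner Z Y = Bp X Y)"

definition N_mu :: "('v::real_inner \<Rightarrow> 'v) \<Rightarrow> real \<Rightarrow> 'v \<times> 'v \<Rightarrow> 'v \<times> 'v" where
  "N_mu r \<mu> X = (case X of (x,a) \<Rightarrow> (x, \<mu> *\<^sub>R inv r x - a))"

definition N_kappa :: "('v::real_inner \<Rightarrow> 'v) \<Rightarrow> real \<Rightarrow> real \<Rightarrow> 'v \<times> 'v \<Rightarrow> 'v \<times> 'v" where
  "N_kappa r k1 k2 X = (case X of (x,a) \<Rightarrow>
     (k1 *\<^sub>R r a + k2 *\<^sub>R x, ((1 - k2\<^sup>2) / k1) *\<^sub>R inv r x - k2 *\<^sub>R a))"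

end

theory Submission
  imports Defs
begin


definition tmapT :: "('v::real_inner \<times> 'v) list \<Rightarrow> 'v \<Rightarrow> 'v" where
  "tmapT ts a = (\<Sum>(x,y)\<leftarrow>ts. inner a y *\<^sub>R x)"

lemma tmap_Cons[simp]: "tmap ((x,y)#ts) a = inner a x *\<^sub>R y + tmap ts a"
  by (simp add: tmap_def)
lemma tmap_Nil[simp]: "tmap [] a = 0" by (simp add: tmap_def)
lemma tmapT_Cons[simp]: "tmapT ((x,y)#ts) a = inner a y *\<^sub>R x + tmapT ts a"
  by (simp add: tmapT_def)
lemma tmapT_Nil[simp]: "tmapT [] a = 0" by (simp add: tmapT_def)

lemma tmap_add: "tmap ts (a + b) = tmap ts a + tmap ts b"
  by (induction ts) (auto simp: inner_add_left scaleR_add_left)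
lemma tmap_scale: "tmap ts (c *\<^sub>R a) = c *\<^sub>R tmap ts a"
  by (induction ts) (auto simp: scaleR_add_right)
lemma tmap_linear: "linear (tmap ts)"
  by (rule linearI) (simp_all add: tmap_add tmap_scale)

lemma inner_tmapT: "inner (tmapT ts \<eta>) \<xi> = inner \<eta> (tmap ts \<xi>)"
  by (induction ts) (auto simp: inner_add_left inner_add_right algebra_simps inner_commute)

lemma ev2_tmap: "ev2 ts a b = inner b (tmap ts a)"
  by (induction ts) (auto simp: ev2_def inner_add_right algebra_simps)

lemma sum_lin1:
  fixes f :: "'v::real_inner \<Rightarrow> real"
  assumes "linear f"
  shows "(\<Sum>(a,b)\<leftarrow>ts. f a * inner \<eta> b) = f (tmapT ts \<eta>)"
proof (induction ts)
  case Nil then show ?case using linear_0[OF assms] by simp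
next
  case (Cons p ts) then show ?case
    by (cases p) (simp add: linear_add[OF assms] linear_scale[OF assms] algebra_simps)
qed

lemma sum_lin2:
  fixes f :: "'v::real_inner \<Rightarrow> real"
  assumes "linear f"
  shows "(\<Sum>(a,b)\<leftarrow>ts. inner \<xi> a * f b) = f (tmap ts \<xi>)"
proof (induction ts)
  case Nil then show ?case using linear_0[OF assms] by simp
next
  case (Cons p ts) then show ?case
    by (cases p) (simp add: linear_add[OF assms] linear_scale[OF assms] algebra_simps)
qed

lemma lin_inner_mult: "linear g \<Longrightarrow> linear (\<lambda>x. inner \<xi> (g x) * c)"
  by (rule linearI) (simp_all add: linear_add linear_scale inner_add_right algebra_simps)

lemma lin_mult_inner: "linear g \<Longrightarrow> linear (\<lambda>x. c * inner \<xi> (g x))"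
  by (rule linearI) (simp_all add: linear_add linear_scale inner_add_right algebra_simps)

lemma cybe_terms:
  fixes Br :: "'v::real_inner \<Rightarrow> 'v \<Rightarrow> 'v"
  assumes l1: "\<And>x. linear (Br x)" and l2: "\<And>y. linear (\<lambda>x. Br x y)"
  shows "(\<Sum>(ai,bi)\<leftarrow>ts. \<Sum>(aj,bj)\<leftarrow>ts. inner \<xi> (Br ai aj) * inner \<eta> bi * inner \<zeta> bj)
      = inner \<xi> (Br (tmapT ts \<eta>) (tmapT ts \<zeta>))" (is ?t1)
  and "(\<Sum>(ai,bi)\<leftarrow>ts. \<Sum>(aj,bj)\<leftarrow>ts. inner \<xi> ai * inner \<eta> (Br bi aj) * inner \<zeta> bj)
      = inner \<eta> (Br (tmap ts \<xi>) (tmapT ts \<zeta>))" (is ?t2)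
  and "(\<Sum>(ai,bi)\<leftarrow>ts. \<Sum>(aj,bj)\<leftarrow>ts. inner \<xi> ai * inner \<eta> aj * inner \<zeta> (Br bi bj))
      = inner \<zeta> (Br (tmap ts \<xi>) (tmap ts \<eta>))" (is ?t3)
proof -
  have i1: "\<And>ai bi. (\<Sum>(aj,bj)\<leftarrow>ts. inner \<xi> (Br ai aj) * inner \<eta> bi * inner \<zeta> bj)
     = inner \<xi> (Br ai (tmapT ts \<zeta>)) * inner \<eta> bi"
    using sum_lin1[OF lin_inner_mult[OF l1]] by simp
  show ?t1
    using sum_lin1[OF lin_inner_mult[OF l2, where c=1]] by (simp add: i1)
  have i2: "\<And>ai bi. (\<Sum>(aj,bj)\<leftarrow>ts. inner \<xi> ai * inner \<eta> (Br bi aj) * inner \<zeta> bj)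
     = inner \<xi> ai * inner \<eta> (Br bi (tmapT ts \<zeta>))"
    using sum_lin1[OF lin_inner_mult[OF l1]] by (simp add: algebra_simps)
  show ?t2
    using sum_lin2[OF lin_inner_mult[OF l2, where c=1]] by (simp add: i2)
  have i3: "\<And>ai bi. (\<Sum>(aj,bj)\<leftarrow>ts. inner \<xi> ai * inner \<eta> aj * inner \<zeta> (Br bi bj))
     = inner \<xi> ai * inner \<zeta> (Br bi (tmap ts \<eta>))"
  proof -
    fix ai bi
    have e: "(\<lambda>(aj,bj). inner \<xi> ai * inner \<eta> aj * inner \<zeta> (Br bi bj)) = 
       (\<lambda>(aj,bj). inner \<eta> aj * (\<lambda>b. inner \<xi> ai * inner \<zeta> (Br bi b)) bj)"
      by (auto simp: fun_eq_iff)
    show "?thesis ai bi" unfolding e by (rule sum_lin2[OF lin_mult_inner[OF l1]])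
  qed
  show ?t3
    using sum_lin2[OF lin_inner_mult[OF l2, where c=1]] by (simp add: i3)
qed

lemma cybe_iff:
  fixes Br :: "'v::real_inner \<Rightarrow> 'v \<Rightarrow> 'v"
  assumes l1: "\<And>x. linear (Br x)" and l2: "\<And>y. linear (\<lambda>x. Br x y)"
  shows "cybe Br ts \<longleftrightarrow> (\<forall>\<xi> \<eta> \<zeta>. inner \<xi> (Br (tmapT ts \<eta>) (tmapT ts \<zeta>)) + inner \<eta> (Br (tmap ts \<xi>) (tmapT ts \<zeta>))
       + inner \<zeta> (Br (tmap ts \<xi>) (tmap ts \<eta>)) = 0)"
  unfolding cybe_def cybe_terms[OF l1 l2] ..




locale LB =
  fixes br :: "'v::euclidean_space \<Rightarrow> 'v \<Rightarrow> 'v" and rs :: "('v \<times> 'v) list"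
  assumes lie: "lie_algebra br" and tri: "triangular br rs" and bj: "bij (tmap rs)"
begin

abbreviation "r \<equiv> tmap rs"
definition "\<omega> = inv r"

lemma br_lin1: "linear (br x)" and br_lin2: "linear (\<lambda>x. br x y)" and br_skew: "br x y = - br y x"
  using lie unfolding lie_algebra_def by blast+

lemma br_simps[simp]:
  "br (a + b) c = br a c + br b c" "br a (b + c) = br a b + br a c"
  "br (a - b) c = br a c - br b c" "br a (b - c) = br a b - br a c"
  "br (k *\<^sub>R a) c = k *\<^sub>R br a c" "br a (k *\<^sub>R c) = k *\<^sub>R br a c"
  "br (- a) c = - br a c" "br a (- c) = - br a c"
  "br 0 c = 0" "br a 0 = 0"
  using linear_add[OF br_lin1] linear_add[OF br_lin2] linear_diff[OF br_lin1] linear_diff[OF br_lin2]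
    linear_scale[OF br_lin1] linear_scale[OF br_lin2] linear_neg[OF br_lin1] linear_neg[OF br_lin2]
    linear_0[OF br_lin1] linear_0[OF br_lin2] by auto

lemma r_simps[simp]: "r (a + b) = r a + r b" "r (a - b) = r a - r b" "r (k *\<^sub>R a) = k *\<^sub>R r a"
  "r (- a) = - r a" "r 0 = 0"
  using linear_add[OF tmap_linear] linear_diff[OF tmap_linear] linear_scale[OF tmap_linear]
    linear_neg[OF tmap_linear] linear_0[OF tmap_linear] by auto

lemma r_skew: "inner (r a) b = - inner a (r b)"
  using tri unfolding triangular_def skew_tensor_def ev2_tmap by (metis inner_commute)

lemma tmapT_r: "tmapT rs \<eta> = - r \<eta>"
proof -
  have "\<forall>z. inner (tmapT rs \<eta>) z = inner (- r \<eta>) z"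
    by (simp add: inner_tmapT r_skew[of \<eta>])
  thus ?thesis using vector_eq_rdot by blast
qed

lemma r_cybe: "inner \<xi> (br (r \<eta>) (r \<zeta>)) - inner \<eta> (br (r \<xi>) (r \<zeta>)) + inner \<zeta> (br (r \<xi>) (r \<eta>)) = 0"
proof -
  have "cybe br rs" using tri unfolding triangular_def by simp
  hence "inner \<xi> (br (tmapT rs \<eta>) (tmapT rs \<zeta>)) + inner \<eta> (br (r \<xi>) (tmapT rs \<zeta>))
       + inner \<zeta> (br (r \<xi>) (r \<eta>)) = 0"
    unfolding cybe_iff[OF br_lin1 br_lin2] by blast
  thus ?thesis unfolding tmapT_r by (simp add: inner_minus_right)
qed

lemma r_om[simp]: "r (\<omega> x) = x" unfolding \<omega>_def using bj by (simp add: bij_def surj_f_inv_f)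
lemma om_r[simp]: "\<omega> (r x) = x" unfolding \<omega>_def using bj by (simp add: bij_def inv_f_f)
lemma om_lin: "linear \<omega>" unfolding \<omega>_def using bj inj_linear_imp_inv_linear[OF tmap_linear[of rs]]
  by (simp add: bij_def)
lemma om_simps[simp]: "\<omega> (a + b) = \<omega> a + \<omega> b" "\<omega> (a - b) = \<omega> a - \<omega> b" "\<omega> (k *\<^sub>R a) = k *\<^sub>R \<omega> a"
  "\<omega> (- a) = - \<omega> a" "\<omega> 0 = 0"
  using linear_add[OF om_lin] linear_diff[OF om_lin] linear_scale[OF om_lin]
    linear_neg[OF om_lin] linear_0[OF om_lin] by auto

lemma om_skew: "inner (\<omega> a) b = - inner a (\<omega> b)"
  using r_skew[of "\<omega> a" "\<omega> b"] by simp

lemma cocycle: "inner (\<omega> a) (br b c) + inner (\<omega> b) (br c a) + inner (\<omega> c) (br a b) = 0"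
  using r_cybe[of "\<omega> a" "\<omega> b" "\<omega> c"] br_skew[of a c] by (simp add: inner_minus_right)

end



lemma veq: "(\<And>z. inner u z = inner v z) \<Longrightarrow> (u::'a::real_inner) = v"
  using vector_eq_rdot by blast
lemma veq_prod: "(\<And>c p. inner (c,p) U = inner (c,p) V) \<Longrightarrow> (U::'a::real_inner \<times> 'b::real_inner) = V"
  by (rule veq, metis inner_commute prod.collapse)

context LB begin

lemma coad_inner: "inner (coad br x a) y = - inner a (br x y)"
  unfolding coad_def using adjoint_clauses(2)[OF br_lin1] by (simp add: inner_minus_left)

lemma coad_simps[simp]:
  "coad br (x1 + x2) a = coad br x1 a + coad br x2 a"
  "coad br (x1 - x2) a = coad br x1 a - coad br x2 a"
  "coad br (k *\<^sub>R x) a = k *\<^sub>R coad br x a"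
  "coad br (- x) a = - coad br x a"
  "coad br x (a1 + a2) = coad br x a1 + coad br x a2"
  "coad br x (a1 - a2) = coad br x a1 - coad br x a2"
  "coad br x (k *\<^sub>R a) = k *\<^sub>R coad br x a"
  "coad br x (- a) = - coad br x a"
  by (rule veq, simp add: coad_inner inner_add_left inner_add_right inner_diff_left inner_diff_right
      inner_minus_left inner_minus_right)+

abbreviation "bd \<equiv> brd br r"

lemma brd_simps[simp]:
  "bd a (b1 + b2) = bd a b1 + bd a b2"
  "bd a (b1 - b2) = bd a b1 - bd a b2"
  "bd a (k *\<^sub>R b) = k *\<^sub>R bd a b"
  "bd (a1 + a2) b = bd a1 b + bd a2 b"
  "bd (a1 - a2) b = bd a1 b - bd a2 b"
  "bd (k *\<^sub>R a) b = k *\<^sub>R bd a b"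
  by (simp_all add: brd_def algebra_simps)

lemma brd_lin: "linear (bd a)"
  by (rule linearI) simp_all

lemma coadd_inner: "inner (coadd br r a x) b = - inner x (bd a b)"
  unfolding coadd_def using adjoint_clauses(2)[OF brd_lin] by (simp add: inner_minus_left)

lemma coadd_inner': "inner b (coadd br r a x) = - inner x (bd a b)"
  using coadd_inner by (simp add: inner_commute)
lemma coad_inner': "inner y (coad br x a) = - inner a (br x y)"
  using coad_inner by (simp add: inner_commute)

lemma inner_brD: "inner (c,p) (brD br r (y,b) (z,e)) = inner c (br y z) + inner c (br (r b) z)
   - inner b (br (r c) z) - inner c (br (r e) y) + inner e (br (r c) y) - inner e (br (r b) p)
   + inner b (br (r e) p) - inner e (br y p) + inner b (br z p)"
  by (simp add: brD_def inner_add_right inner_diff_right coadd_inner' coad_inner' brd_def algebra_simps)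


abbreviation "bD \<equiv> brD br r"

lemma brD_skew: "bD X Y = - bD Y X"
proof -
  obtain x a y b where "X = (x,a)" "Y = (y,b)" by fastforce
  thus ?thesis using br_skew[of x y] by (simp add: brD_def brd_def algebra_simps)
qed

lemma bD_add: "bD X (Y1 + Y2) = bD X Y1 + bD X Y2"
  by (cases X, cases Y1, cases Y2, rule veq_prod)
     (simp add: inner_brD inner_add_left inner_add_right algebra_simps)
lemma bD_scale: "bD X (k *\<^sub>R Y) = k *\<^sub>R bD X Y"
  by (cases X, cases Y, rule veq_prod)
     (simp add: inner_brD inner_add_left inner_add_right algebra_simps)
lemma bD_lin1: "linear (bD X)" by (rule linearI) (simp_all add: bD_add bD_scale)
lemma bD_lin2: "linear (\<lambda>X. bD X Y)"
  by (rule linearI) (simp_all add: brD_skew[of _ Y] bD_add bD_scale)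

definition "Tp x1 u1 x2 u2 x3 u3 = inner (\<omega> u1) (br x2 x3) + inner (\<omega> u2) (br x3 x1) + inner (\<omega> u3) (br x1 x2)"

lemma TD_K: "inner (\<omega> u1, x1 - u1) (bD (x2 - u2, \<omega> u2) (x3 - u3, \<omega> u3)) = Tp x1 u1 x2 u2 x3 u3"
  using cocycle[of u1 u2 u3]
  by (simp add: br_skew[of u1 x1] br_skew[of x2 x1] br_skew[of u2 x1] br_skew[of x3 x1] br_skew[of u3 x1] br_skew[of x2 u1] br_skew[of u2 u1] br_skew[of x3 u1] br_skew[of u3 u1] br_skew[of u2 x2] br_skew[of x3 x2] br_skew[of u3 x2] br_skew[of x3 u2] br_skew[of u3 u2] br_skew[of u3 x3] inner_minus_right inner_brD Tp_def inner_add_right inner_diff_right algebra_simps)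

end


context LB begin

lemma Tp_alt: "Tp x1 u1 x2 u2 x3 u3 = inner (\<omega> u1) (br x2 x3) + inner (\<omega> u2) (br x3 x1)
   - inner (\<omega> x1) (br x2 u3) - inner (\<omega> x2) (br u3 x1)"
  using cocycle[of u3 x1 x2] unfolding Tp_def by simp

lemma Tp_swap23: "Tp x1 u1 x3 u3 x2 u2 = - Tp x1 u1 x2 u2 x3 u3"
  unfolding Tp_def using br_skew[of x3 x2] br_skew[of x2 x1] br_skew[of x1 x3]
  by (simp add: inner_minus_right)
lemma Tp_swap12: "Tp x2 u2 x1 u1 x3 u3 = - Tp x1 u1 x2 u2 x3 u3"
  unfolding Tp_def using br_skew[of x3 x2] br_skew[of x2 x1] br_skew[of x1 x3]
  by (simp add: inner_minus_right)

lemma final_alg: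
  fixes \<alpha> \<beta> \<gamma> \<sigma> :: real
  assumes "\<alpha>^2 + \<beta> * \<gamma> = 1" "\<sigma>^2 = 1"
  shows "Tp x1 u1 (\<sigma> *\<^sub>R x2 - (\<alpha> *\<^sub>R x2 + \<beta> *\<^sub>R u2)) (\<sigma> *\<^sub>R u2 - (\<gamma> *\<^sub>R x2 - \<alpha> *\<^sub>R u2))
              (\<sigma> *\<^sub>R x3 - (\<alpha> *\<^sub>R x3 + \<beta> *\<^sub>R u3)) (\<sigma> *\<^sub>R u3 - (\<gamma> *\<^sub>R x3 - \<alpha> *\<^sub>R u3))
       - Tp (\<alpha> *\<^sub>R x1 + \<beta> *\<^sub>R u1 + \<sigma> *\<^sub>R x1) (\<gamma> *\<^sub>R x1 - \<alpha> *\<^sub>R u1 + \<sigma> *\<^sub>R u1) x2 u2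
              (\<sigma> *\<^sub>R x3 - (\<alpha> *\<^sub>R x3 + \<beta> *\<^sub>R u3)) (\<sigma> *\<^sub>R u3 - (\<gamma> *\<^sub>R x3 - \<alpha> *\<^sub>R u3))
       + Tp (\<alpha> *\<^sub>R x1 + \<beta> *\<^sub>R u1 + \<sigma> *\<^sub>R x1) (\<gamma> *\<^sub>R x1 - \<alpha> *\<^sub>R u1 + \<sigma> *\<^sub>R u1)
            (\<alpha> *\<^sub>R x2 + \<beta> *\<^sub>R u2 + \<sigma> *\<^sub>R x2) (\<gamma> *\<^sub>R x2 - \<alpha> *\<^sub>R u2 + \<sigma> *\<^sub>R u2) x3 u3 = 0"
  unfolding Tp_alt
  apply (simp add: inner_add_right inner_diff_right inner_add_left inner_diff_left algebra_simps)
  using assms by algebra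

end



lemma tmap_sym: "tmap (sym_part ts) a = (1/2) *\<^sub>R (tmap ts a + tmapT ts a)"
  by (induction ts) (auto simp: sym_part_def tmap_def tmapT_def algebra_simps)
lemma tmapT_sym: "tmapT (sym_part ts) a = (1/2) *\<^sub>R (tmap ts a + tmapT ts a)"
  by (induction ts) (auto simp: sym_part_def tmap_def tmapT_def algebra_simps)

lemma sum_list_split2:
  fixes F G :: "'a \<Rightarrow> 'b \<Rightarrow> 'c::comm_monoid_add"
  shows "(\<Sum>(x,y)\<leftarrow>ts. F x y + G x y) = (\<Sum>(x,y)\<leftarrow>ts. F x y) + (\<Sum>(x,y)\<leftarrow>ts. G x y)"
  by (induction ts) (auto simp: algebra_simps)

lemma lin_inner: "linear g \<Longrightarrow> linear (\<lambda>x. inner \<xi> (g x))"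
  by (rule linearI) (simp_all add: linear_add linear_scale inner_add_right)

lemma tmap_basis:
  fixes t :: "'a::euclidean_space \<Rightarrow> 'a"
  assumes "linear t"
  shows "\<exists>ts. tmap ts = t"
proof -
  obtain BL :: "'a list" where BL: "set BL = Basis" "distinct BL" using finite_distinct_list[OF finite_Basis] by blast
  have "tmap (map (\<lambda>b. (b, t b)) BL) a = t a" for a
  proof -
    have "tmap (map (\<lambda>b. (b, t b)) BL) a = (\<Sum>b\<leftarrow>BL. inner a b *\<^sub>R t b)"
      by (simp add: tmap_def o_def)
    also have "\<dots> = (\<Sum>b\<in>Basis. inner a b *\<^sub>R t b)"
      using sum.distinct_set_conv_list[OF BL(2), of "\<lambda>b. inner a b *\<^sub>R t b"] BL(1) by simp
    also have "\<dots> = t (\<Sum>b\<in>Basis. inner a b *\<^sub>R b)"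
      by (simp add: linear_sum[OF assms] linear_scale[OF assms])
    also have "\<dots> = t a" by (simp add: euclidean_representation)
    finally show ?thesis .
  qed
  thus ?thesis by blast
qed

context LB begin

definition "\<psi> X = (snd X, fst X)"
definition "K X = (fst X - snd X, \<omega> (snd X))"
definition "Kinv P = (fst P + r (snd P), r (snd P))"

lemma K_Kinv[simp]: "K (Kinv P) = P" by (simp add: K_def Kinv_def)
lemma psi_psi[simp]: "\<psi> (\<psi> X) = X" by (simp add: \<psi>_def)
lemma inner_psi: "inner (\<psi> a) (\<psi> b) = inner a b"
  by (cases a, cases b) (simp add: \<psi>_def add.commute)

lemma TD_K': "inner (\<psi> (K X)) (bD (K Y) (K Z)) = Tp (fst X) (snd X) (fst Y) (snd Y) (fst Z) (snd Z)"
  using TD_K[of "snd X" "fst X" "fst Y" "snd Y" "fst Z" "snd Z"]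
  by (simp add: \<psi>_def K_def)

end


context LB begin

lemma K_simps: "K (X + Y) = K X + K Y" "K (X - Y) = K X - K Y" "K (c *\<^sub>R X) = c *\<^sub>R K X"
  by (simp_all add: K_def algebra_simps)
lemma Kinv_simps: "Kinv (X + Y) = Kinv X + Kinv Y" "Kinv (c *\<^sub>R X) = c *\<^sub>R Kinv X"
  by (simp_all add: Kinv_def algebra_simps)
lemma psi_simps: "\<psi> (X + Y) = \<psi> X + \<psi> Y" "\<psi> (X - Y) = \<psi> X - \<psi> Y" "\<psi> (c *\<^sub>R X) = c *\<^sub>R \<psi> X"
  by (simp_all add: \<psi>_def)

lemma main:
  fixes N :: "'v \<times> 'v \<Rightarrow> 'v \<times> 'v" and \<alpha> \<beta> \<gamma> \<sigma> :: real
  assumes hN: "\<And>x u. N (K (x,u)) = K (\<alpha> *\<^sub>R x + \<beta> *\<^sub>R u, \<gamma> *\<^sub>R x - \<alpha> *\<^sub>R u)"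
    and h1: "\<alpha>^2 + \<beta>*\<gamma> = 1" and hs: "\<sigma>^2 = 1"
  shows "factorizable bD (\<lambda>X. N (\<psi> X) + \<sigma> *\<^sub>R \<psi> X)"
proof -
  define M where "M X = (\<alpha> *\<^sub>R fst X + \<beta> *\<^sub>R snd X, \<gamma> *\<^sub>R fst X - \<alpha> *\<^sub>R snd X)" for X :: "'v \<times> 'v"
  have M_simps: "M (X + Y) = M X + M Y" "M (c *\<^sub>R X) = c *\<^sub>R M X" for X Y c
    by (simp_all add: M_def algebra_simps)
  have NK: "N (K X) = K (M X)" for X using hN[of "fst X" "snd X"] by (simp add: M_def)
  have Nf: "N P = K (M (Kinv P))" for P using NK[of "Kinv P"] by simp
  have Nlin: "linear N"
    by (rule linearI) (simp_all add: Nf Kinv_simps M_simps K_simps)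
  define t where "t X = N (\<psi> X) + \<sigma> *\<^sub>R \<psi> X" for X
  have tlin: "linear t"
    unfolding t_def by (rule linearI) (simp_all add: psi_simps linear_add[OF Nlin] linear_scale[OF Nlin] algebra_simps)
  obtain ts where ts: "tmap ts = t" using tmap_basis[OF tlin] by blast
  have Nskew: "inner (\<psi> (N P)) Q = - inner (\<psi> P) (N Q)" for P Q
  proof -
    obtain x u where P: "P = K (x,u)" using K_Kinv by (metis prod.collapse)
    obtain y v where Q: "Q = K (y,v)" using K_Kinv by (metis prod.collapse)
    show ?thesis unfolding P Q hN
      using om_skew[of x y] om_skew[of x v] om_skew[of u y] om_skew[of u v]
        om_skew[of y x] om_skew[of v x] om_skew[of y u] om_skew[of v u]
        om_skew[of x u] om_skew[of y v] om_skew[of u x] om_skew[of v y]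
        om_skew[of x x] om_skew[of u u] om_skew[of y y] om_skew[of v v]
      by (simp add: K_def \<psi>_def inner_add_left inner_add_right inner_diff_left inner_diff_right algebra_simps)
  qed
  have tT: "tmapT ts \<eta> = \<sigma> *\<^sub>R \<psi> \<eta> - N (\<psi> \<eta>)" for \<eta>
  proof (rule veq)
    fix z
    have e1: "inner \<eta> (N (\<psi> z)) = - inner (N (\<psi> \<eta>)) z"
      using Nskew[of "\<psi> \<eta>" "\<psi> z"] inner_psi[of "N (\<psi> \<eta>)" z] by simp
    have e2: "inner \<eta> (\<psi> z) = inner (\<psi> \<eta>) z"
      using inner_psi[of "\<psi> \<eta>" z] by simp
    show "inner (tmapT ts \<eta>) z = inner (\<sigma> *\<^sub>R \<psi> \<eta> - N (\<psi> \<eta>)) z"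
      unfolding inner_tmapT ts t_def using e1 e2
      by (simp add: inner_add_right inner_diff_left)
  qed
  define A where "A X = M X + \<sigma> *\<^sub>R X" for X :: "'v \<times> 'v"
  define C where "C X = \<sigma> *\<^sub>R X - M X" for X :: "'v \<times> 'v"
  have tK: "tmap ts (\<psi> (K X)) = K (A X)" for X
    unfolding ts t_def A_def by (simp add: NK K_simps)
  have tTK: "tmapT ts (\<psi> (K X)) = K (C X)" for X
    unfolding tT C_def by (simp add: NK K_simps)
  have cyb: "cybe bD ts"
    unfolding cybe_iff[OF bD_lin1 bD_lin2]
  proof (intro allI)
    fix \<xi> \<eta> \<zeta> :: "'v \<times> 'v"
    define X where "X = Kinv (\<psi> \<xi>)"
    define Y where "Y = Kinv (\<psi> \<eta>)"
    define Z where "Z = Kinv (\<psi> \<zeta>)"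
    have xi: "\<xi> = \<psi> (K X)" and eta: "\<eta> = \<psi> (K Y)" and zeta: "\<zeta> = \<psi> (K Z)"
      by (simp_all add: X_def Y_def Z_def)
    have key: "Tp (fst X) (snd X) (fst (C Y)) (snd (C Y)) (fst (C Z)) (snd (C Z))
      + Tp (fst Y) (snd Y) (fst (A X)) (snd (A X)) (fst (C Z)) (snd (C Z))
      + Tp (fst Z) (snd Z) (fst (A X)) (snd (A X)) (fst (A Y)) (snd (A Y)) = 0"
      using Tp_swap12[of "fst Y" "snd Y" "fst (A X)" "snd (A X)" "fst (C Z)" "snd (C Z)"]
        Tp_swap12[of "fst Z" "snd Z" "fst (A X)" "snd (A X)" "fst (A Y)" "snd (A Y)"]
        Tp_swap23[of "fst (A X)" "snd (A X)" "fst Z" "snd Z" "fst (A Y)" "snd (A Y)"]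
        final_alg[OF h1 hs, of "fst X" "snd X" "fst Y" "snd Y" "fst Z" "snd Z"]
      by (simp add: A_def C_def M_def)
    show "inner \<xi> (bD (tmapT ts \<eta>) (tmapT ts \<zeta>)) + inner \<eta> (bD (tmap ts \<xi>) (tmapT ts \<zeta>))
       + inner \<zeta> (bD (tmap ts \<xi>) (tmap ts \<eta>)) = 0"
      unfolding xi eta zeta tK tTK TD_K' using key by simp
  qed
  have sym1: "tmap (sym_part ts) = (\<lambda>a. \<sigma> *\<^sub>R \<psi> a)"
    apply (rule ext) apply (simp add: tmap_sym ts t_def tT algebra_simps)
    by (metis scaleR_add_left field_sum_of_halves)
  have sym2: "tmapT (sym_part ts) = (\<lambda>a. \<sigma> *\<^sub>R \<psi> a)"
    by (rule ext) (metis tmapT_sym tmap_sym sym1)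
  have ss: "\<sigma> * \<sigma> = 1" using hs by (simp add: power2_eq_square)
  have bij1: "bij (tmap (sym_part ts))"
    unfolding sym1 by (rule o_bij[where g="\<lambda>a. \<sigma> *\<^sub>R \<psi> a"]) (auto simp: fun_eq_iff psi_simps ss)
  have inv1: "invariant_tensor bD (sym_part ts)"
    unfolding invariant_tensor_def
  proof (intro allI)
    fix z a b :: "'v \<times> 'v"
    define X where "X = Kinv (\<psi> a)"
    define Y where "Y = Kinv (\<psi> b)"
    define Z where "Z = Kinv z"
    have aa: "a = \<psi> (K X)" and bb: "\<psi> b = K Y" and zz: "z = K Z" and bb': "b = \<psi> (K Y)"
      by (simp_all add: X_def Y_def Z_def)
    have s1: "(\<Sum>(x,y)\<leftarrow>sym_part ts. inner a (bD z x) * inner b y) = inner a (bD z (tmapT (sym_part ts) b))"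
      by (rule sum_lin1[OF lin_inner[OF bD_lin1]])
    have s2: "(\<Sum>(x,y)\<leftarrow>sym_part ts. inner a x * inner b (bD z y)) = inner b (bD z (tmap (sym_part ts) a))"
      by (rule sum_lin2[OF lin_inner[OF bD_lin1]])
    have k: "inner a (bD z (\<psi> b)) + inner b (bD z (\<psi> a)) = 0"
    proof -
      have "inner a (bD z (\<psi> b)) + inner b (bD z (\<psi> a))
         = Tp (fst X) (snd X) (fst Z) (snd Z) (fst Y) (snd Y) + Tp (fst Y) (snd Y) (fst Z) (snd Z) (fst X) (snd X)"
        using TD_K'[of X Z Y] TD_K'[of Y Z X] aa bb zz bb' by simp
      also have "\<dots> = 0"
        using Tp_swap12[of "fst Y" "snd Y" "fst Z" "snd Z" "fst X" "snd X"]
          Tp_swap23[of "fst Z" "snd Z" "fst Y" "snd Y" "fst X" "snd X"]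
          Tp_swap12[of "fst Z" "snd Z" "fst X" "snd X" "fst Y" "snd Y"] by simp
      finally show ?thesis .
    qed
    show "(\<Sum>(x,y)\<leftarrow>sym_part ts. inner a (bD z x) * inner b y + inner a x * inner b (bD z y)) = 0"
      unfolding sum_list_split2 s1 s2 sym1 sym2 using k
      by (simp add: bD_scale inner_add_right algebra_simps flip: distrib_left)
  qed
  show ?thesis unfolding factorizable_def
    using ts cyb inv1 bij1 unfolding t_def by blast
qed

end


context LB begin

lemma phi_eq: "phi X = \<psi> X"
  unfolding phi_def
proof (rule the_equality)
  show "\<forall>Y. inner (\<psi> X) Y = Bp X Y" by (auto simp: \<psi>_def Bp_def split: prod.splits)
next
  fix Z assume "\<forall>Y. inner Z Y = Bp X Y"
  hence "\<forall>Y. inner Z Y = inner (\<psi> X) Y" by (auto simp: \<psi>_def Bp_def split: prod.splits)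
  thus "Z = \<psi> X" using veq by blast
qed

lemma inv_phi: "inv phi = \<psi>"
proof -
  have e: "phi = \<psi>" by (rule ext) (rule phi_eq)
  show ?thesis unfolding e by (rule inv_unique_comp) (auto simp: fun_eq_iff)
qed

lemma mu_case:
  assumes "\<sigma> = 1 \<or> \<sigma> = -1"
  shows "factorizable bD (\<lambda>X. N_mu r \<mu> (inv phi X) + \<sigma> *\<^sub>R inv phi X)"
  unfolding inv_phi
proof (rule main[where \<alpha>="1+\<mu>" and \<beta>="-(2+\<mu>)" and \<gamma>=\<mu>])
  show "N_mu r \<mu> (K (x, u)) = K ((1 + \<mu>) *\<^sub>R x + - (2 + \<mu>) *\<^sub>R u, \<mu> *\<^sub>R x - (1 + \<mu>) *\<^sub>R u)" for x u
    by (simp add: N_mu_def K_def \<omega>_def[symmetric] algebra_simps scaleR_2)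
  show "(1 + \<mu>)\<^sup>2 + - (2 + \<mu>) * \<mu> = 1" by (simp add: power2_eq_square algebra_simps)
  show "\<sigma>\<^sup>2 = 1" using assms by auto
qed

lemma kappa_case:
  assumes "\<sigma> = 1 \<or> \<sigma> = -1" and k1: "k1 \<noteq> 0"
  shows "factorizable bD (\<lambda>X. N_kappa r k1 k2 (inv phi X) + \<sigma> *\<^sub>R inv phi X)"
  unfolding inv_phi
proof (rule main[where \<alpha>="k2 + (1 - k2\<^sup>2) / k1" and \<beta>="k1 - (1 - k2\<^sup>2) / k1 - 2 * k2" and \<gamma>="(1 - k2\<^sup>2) / k1"])
  show "N_kappa r k1 k2 (K (x, u)) = K ((k2 + (1 - k2\<^sup>2) / k1) *\<^sub>R x + (k1 - (1 - k2\<^sup>2) / k1 - 2 * k2) *\<^sub>R u,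
     ((1 - k2\<^sup>2) / k1) *\<^sub>R x - (k2 + (1 - k2\<^sup>2) / k1) *\<^sub>R u)" for x u
    by (simp add: N_kappa_def K_def \<omega>_def[symmetric] algebra_simps)
       (metis scaleR_2 scaleR_scaleR mult.commute)
  show "(k2 + (1 - k2\<^sup>2) / k1)\<^sup>2 + (k1 - (1 - k2\<^sup>2) / k1 - 2 * k2) * ((1 - k2\<^sup>2) / k1) = 1"
    using k1 by (simp add: power2_eq_square field_simps)
  show "\<sigma>\<^sup>2 = 1" using assms by auto
qed

end

theorem proposition4p10:
  fixes br :: "real^'n \<Rightarrow> real^'n \<Rightarrow> real^'n"
    and rs :: "((real^'n) \<times> (real^'n)) list"
    and \<mu> \<kappa>1 \<kappa>2 \<sigma> :: real
  assumes "lie_algebra br"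
    and "triangular br rs"
    and "bij (tmap rs)"
    and "\<sigma> = 1 \<or> \<sigma> = -1"
    and "\<kappa>1 \<noteq> 0" and "\<kappa>2\<^sup>2 \<noteq> 1"
  shows "factorizable (brD br (tmap rs)) (\<lambda>X. N_mu (tmap rs) \<mu> (inv phi X) + \<sigma> *\<^sub>R inv phi X)
       \<and> factorizable (brD br (tmap rs)) (\<lambda>X. N_kappa (tmap rs) \<kappa>1 \<kappa>2 (inv phi X) + \<sigma> *\<^sub>R inv phi X)"
proof -
  interpret LB br rs using assms(1-3) by unfold_locales
  show ?thesis using mu_case[OF assms(4)] kappa_case[OF assms(4,5)] by blast
qed


end
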